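(* Let ${\boldsymbol{k}}=(k_1,\dots,k_r)\in\mathbb{Z}^r$ with $r\ge2$, and suppose $k_i=-k$ for some $i\in\{1,\dots,r\}$ and some integer $k\ge0$. Then in $\widehat{\mathcal{A}}$: (i) If $i=1$, \[\zeta_{\widehat{\mathcal{A}}}({\boldsymbol{k}})=\frac{1}{k+1}\sum_{j=0}^{k+1}\binom{k+1}{j}B_j\Bigl((-1)^j\zeta_{\widehat{\mathcal{A}}}(k_2-k-1+j,k_3,\dots,k_r)-\delta_{j,k+1}\,\zeta_{\widehat{\mathcal{A}}}(k_2,\dots,k_r)\Bigr).\] (ii) If $1<i<r$, \[\zeta_{\widehat{\mathcal{A}}}({\boldsymbol{k}})=\frac{1}{k+1}\sum_{j=0}^{k+1}\binom{k+1}{j}B_j\Bigl((-1)^j\zeta_{\widehat{\mathcal{A}}}({\boldsymbol{k}}^{+}_j)-\zeta_{\widehat{\mathcal{A}}}({\boldsymbol{k}}^{-}_j)\Bigr),\] where ${\boldsymbol{k}}^{+}_j=(k_1,\dots,k_{i-1},k_{i+1}-k-1+j,k_{i+2},\dots,k_r)$ and ${\boldsymbol{k}}^{-}_j=(k_1,\dots,k_{i-2},k_{i-1}-k-1+j,k_{i+1},\dots,k_r)$ (both obtained from ${\boldsymbol{k}}$ by deleting the $i$-th entry and modifying the indicated neighbouring entry). (iii) If $i=r$, \[\zeta_{\widehat{\mathcal{A}}}({\boldsymbol{k}})=\frac{1}{k+1}\sum_{j=0}^{k+1}\binom{k+1}{j}B_j\Bigl((-1)^j\zeta_{\widehat{\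mathcal{A}}}(k_1,\dots,k_{r-1})\,{\boldsymbol{p}}^{k+1-j}-\zeta_{\widehat{\mathcal{A}}}(k_1,\dots,k_{r-2},k_{r-1}-k-1+j)\Bigr).\]
   Context: $B_n$ are the Seki–Bernoulli numbers defined by $ze^z/(e^z-1)=\sum_{n\ge0}B_nz^n/n!$ (so $B_1=1/2$), and $\delta$ is the Kronecker delta. Let $\widehat{\mathcal{A}}=\varprojlim_n\bigl[(\prod_{p}\mathbb{Z}/p^n\mathbb{Z})/(\bigoplus_p\mathbb{Z}/p^n\mathbb{Z})\bigr]$ ($p$ over primes), a $\mathbb{Q}$-algebra. For any integer index ${\boldsymbol{k}}=(k_1,\dots,k_r)$ (entries possibly non-positive) and prime $p$, $\zeta_p({\boldsymbol{k}})=\sum_{0<n_1<\cdots<n_r<p}n_1^{-k_1}\cdots n_r^{-k_r}\in\mathbb{Z}_{(p)}$, and $\zeta_{\widehat{\mathcal{A}}}({\boldsymbol{k}})=\bigl((\zeta_p({\boldsymbol{k}})\bmod p^n)_p\bigr)_n$; for the empty index this value is $1$. ${\boldsymbol{p}}=((p\bmod p^n)_p)_n\in\widehat{\mathcal{A}}$, with ${\boldsymbol{p}}^0=1$. *)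

theory Defs
  imports Complex_Main "HOL-Computational_Algebra.Computational_Algebra"
begin

(* Seki-Bernoulli numbers: z e^z/(e^z-1) = sum B_n z^n/n!, i.e. the unique formal
   power series F with F * (e^z - 1) = z e^z; B_n = n! * [z^n] F. *)
definition seki_bernoulli :: "nat \<Rightarrow> rat" where
  "seki_bernoulli n =
     fact n * fps_nth (THE F :: rat fps. F * (fps_exp 1 - 1) = fps_X * fps_exp 1) n"

definition zeta_p :: "nat \<Rightarrow> int list \<Rightarrow> rat" where
  "zeta_p p ks =
     (\<Sum>ns \<in> {ns. length ns = length ks \<and> sorted_wrt (<) ns \<and> set ns \<subseteq> {1..<p}}.
        \<Prod>i<length ks. (of_nat (ns ! i) :: rat) powi (- (ks ! i)))"

(* An element of A-hat is represented by a family (a_p)_p of rationals (indexed by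
   primes p, p-integral for almost all p).  Two families give the same element of
   A-hat iff for every n they agree modulo p^n Z_(p) for all but finitely many primes p. *)
definition padic_cong :: "nat \<Rightarrow> nat \<Rightarrow> rat \<Rightarrow> rat \<Rightarrow> bool" where
  "padic_cong p n a b \<longleftrightarrow>
     (\<exists>u v :: int. \<not> int p dvd v \<and> a - b = of_int (int p ^ n * u) / of_int v)"

definition ahat_eq :: "(nat \<Rightarrow> rat) \<Rightarrow> (nat \<Rightarrow> rat) \<Rightarrow> bool" (infix "\<doteq>\<^sub>A" 50) where
  "a \<doteq>\<^sub>A b \<longleftrightarrow> (\<forall>n. finite {p. prime p \<and> \<not> padic_cong p n (a p) (b p)})"

definition zeta_A :: "int list \<Rightarrow> nat \<Rightarrow> rat" where
  "zeta_A ks = (\<lambda>p. zeta_p p ks)"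

end

theory Submission
  imports Defs
begin



abbreviation "EE \<equiv> (fps_exp (1::rat))"

lemma EE1_nz: "EE - 1 \<noteq> 0"
proof
  assume "EE - 1 = 0"
  hence "(EE - 1) $ 1 = 0" by simp
  thus False by simp
qed

lemma bern_ex1: "\<exists>!F :: rat fps. F * (EE - 1) = fps_X * EE"
proof
  define G where "G = fps_shift 1 (EE - 1)"
  have G0: "G $ 0 \<noteq> 0" unfolding G_def by simp
  have sub: "1 \<le> subdegree (EE - 1)"
    by (metis EE1_nz One_nat_def Suc_leI fps_sub_nth fps_exp_nth nth_subdegree_zero_iff
        of_nat_1 fact_0 div_by_1 power_0 fps_one_nth zero_less_iff_neq_zero diff_self)
  have XG: "G * fps_X = EE - 1" unfolding G_def using fps_shift_times_fps_X[OF sub] .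
  show "(EE * inverse G) * (EE - 1) = fps_X * EE"
    by (metis XG G0 inverse_mult_eq_1 mult.assoc mult.commute mult.left_neutral)
  fix F assume "F * (EE - 1) = fps_X * EE"
  hence "(F - EE * inverse G) * (EE - 1) = 0"
    using XG G0 by (metis (no_types, lifting) \<open>(EE * inverse G) * (EE - 1) = fps_X * EE\<close> left_diff_distrib right_minus_eq)
  thus "F = EE * inverse G" using EE1_nz by simp
qed

definition "Fb = (THE F :: rat fps. F * (EE - 1) = fps_X * EE)"

lemma Fb_eq: "Fb * (EE - 1) = fps_X * EE"
  unfolding Fb_def using theI'[OF bern_ex1] .

lemma Fb_unique: "G * (EE - 1) = fps_X * EE \<Longrightarrow> G = Fb"
  using bern_ex1 Fb_eq by blast

lemma sb_Fb: "seki_bernoulli n = fact n * Fb $ n"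
  unfolding seki_bernoulli_def Fb_def ..

definition refl :: "rat fps \<Rightarrow> rat fps" where
  "refl A = Abs_fps (\<lambda>n. (-1)^n * A $ n)"

lemma refl_nth[simp]: "refl A $ n = (-1)^n * A $ n"
  unfolding refl_def by simp

lemma refl_mult: "refl (A * B) = refl A * refl B"
proof (rule fps_ext)
  fix n
  have "(refl A * refl B) $ n = (\<Sum>i=0..n. (-1)^n * (A$i * B$(n-i)))"
    unfolding fps_mult_nth
  proof (rule sum.cong[OF refl])
    fix i assume "i \<in> {0..n}"
    hence "(-1::rat)^i * (-1)^(n-i) = (-1)^n" by (simp add: power_add[symmetric])
    thus "refl A $ i * refl B $ (n - i) = (-1) ^ n * (A $ i * B $ (n - i))"
      by (simp add: algebra_simps)
  qed
  thus "refl (A * B) $ n = (refl A * refl B) $ n"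
    by (simp add: fps_mult_nth sum_distrib_left)
qed

lemma refl_diff: "refl (A - B) = refl A - refl B"
  by (rule fps_ext) (simp add: algebra_simps)

lemma refl_one: "refl 1 = 1"
  by (rule fps_ext) simp

lemma refl_X: "refl fps_X = - fps_X"
  by (rule fps_ext) (simp add: fps_X_def)

lemma refl_E: "refl EE = fps_exp (-1)"
  by (rule fps_ext) (simp add: power_minus')

lemma expm_E: "fps_exp (-1) * EE = 1"
  using fps_exp_add_mult[of "-1::rat" 1] by simp

definition "Nb = refl Fb"

lemma Nb_E: "Nb * EE = Fb"
proof -
  have "refl (Fb * (EE - 1)) = refl (fps_X * EE)" using Fb_eq by simp
  hence h: "Nb * (fps_exp (-1) - 1) = - fps_X * fps_exp (-1)"
    unfolding Nb_def refl_mult refl_diff refl_one refl_X refl_E .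
  have "Nb * (fps_exp (-1) - 1) * EE = - fps_X * fps_exp (-1) * EE" using h by simp
  hence "Nb * (1 - EE) = - fps_X"
    using expm_E by (simp add: algebra_simps)
  hence "Nb * (EE - 1) = fps_X" by (metis minus_diff_eq minus_mult_right neg_equal_iff_equal)
  hence "(Nb * EE) * (EE - 1) = fps_X * EE" by (simp add: algebra_simps)
  thus ?thesis by (rule Fb_unique)
qed

definition ap :: "rat fps \<Rightarrow> nat \<Rightarrow> rat \<Rightarrow> rat" where
  "ap A m x = fact m * (A * fps_exp x) $ m"

lemma ap_expand: "ap A m x = (\<Sum>j=0..m. of_nat (m choose j) * (fact j * A$j) * x^(m-j))"
  unfolding ap_def fps_mult_nth sum_distrib_left
proof (rule sum.cong[OF refl])
  fix j assume "j \<in> {0..m}"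
  hence jm: "j \<le> m" by simp
  have "of_nat (m choose j) = (fact m / (fact j * fact (m - j)) :: rat)" using binomial_fact[OF jm] .
  thus "fact m * (A $ j * fps_exp x $ (m - j)) = of_nat (m choose j) * (fact j * A $ j) * x ^ (m - j)"
    by (simp add: field_simps)
qed

lemma ap_shift: "ap A m (x + y) = ap (A * fps_exp y) m x"
  unfolding ap_def fps_exp_add_mult by (simp add: algebra_simps)

lemma ap_diff: "ap (A - B) m x = ap A m x - ap B m x"
  unfolding ap_def by (simp add: algebra_simps)

lemma ap_XE: "ap (fps_X * EE) (Suc k) x = of_nat (Suc k) * (x + 1)^k"
proof -
  have "ap (fps_X * EE) (Suc k) x = fact (Suc k) * (fps_X * (EE * fps_exp x)) $ Suc k"
    unfolding ap_def by (simp add: algebra_simps)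
  also have "\<dots> = fact (Suc k) * (fps_exp (x+1)) $ k"
    by (simp add: fps_exp_add_mult[symmetric] add.commute)
  also have "\<dots> = of_nat (Suc k) * (x + 1)^k"
    by (simp add: field_simps)
  finally show ?thesis .
qed

lemma Q_step: "ap Fb (Suc k) (x + 1) - ap Fb (Suc k) x = of_nat (Suc k) * (x + 1)^k"
proof -
  have "ap Fb (Suc k) (x + 1) - ap Fb (Suc k) x = ap (Fb * EE - Fb) (Suc k) x"
    by (simp add: ap_shift ap_diff)
  also have "Fb * EE - Fb = fps_X * EE" using Fb_eq by (simp add: algebra_simps)
  finally show ?thesis using ap_XE by simp
qed

lemma R_shift: "ap Nb (Suc k) (x + 1) = ap Fb (Suc k) x"
  by (simp add: ap_shift Nb_E)

lemma R_step: "ap Nb (Suc k) (x + 1) - ap Nb (Suc k) x = of_nat (Suc k) * x ^ k"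
proof -
  have "ap Nb (Suc k) x = ap Nb (Suc k) ((x - 1) + 1)" by simp
  also have "\<dots> = ap Fb (Suc k) (x - 1)" by (rule R_shift)
  finally have 1: "ap Nb (Suc k) x = ap Fb (Suc k) (x - 1)" .
  have 2: "ap Nb (Suc k) (x + 1) = ap Fb (Suc k) x" by (rule R_shift)
  have 3: "ap Fb (Suc k) ((x - 1) + 1) - ap Fb (Suc k) (x - 1) = of_nat (Suc k) * ((x - 1) + 1)^k"
    by (rule Q_step)
  show ?thesis using 1 2 3 by simp
qed

lemma faul_aux:
  fixes a b :: nat
  assumes "a < b"
  shows "of_nat (Suc k) * (\<Sum>n\<in>{a<..<b}. (of_nat n :: rat) ^ k)
         = ap Nb (Suc k) (of_nat b) - ap Fb (Suc k) (of_nat a)"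
  using assms
proof (induction b)
  case 0 thus ?case by simp
next
  case (Suc b)
  have e: "(of_nat (Suc b) :: rat) = of_nat b + 1" by simp
  show ?case
  proof (cases "a = b")
    case True
    have "{a<..<Suc b} = {}" using True by auto
    moreover have "ap Nb (Suc k) (of_nat b + 1) = ap Fb (Suc k) (of_nat b)" by (rule R_shift)
    ultimately show ?thesis using True unfolding e by simp
  next
    case False
    hence ab: "a < b" using Suc.prems by simp
    have set: "{a<..<Suc b} = insert b {a<..<b}" using ab by auto
    have st: "ap Nb (Suc k) (of_nat b + 1) - ap Nb (Suc k) (of_nat b) = of_nat (Suc k) * (of_nat b)^k"
      by (rule R_step)
    have "of_nat (Suc k) * (\<Sum>n\<in>{a<..<Suc b}. (of_nat n :: rat) ^ k)
        = of_nat (Suc k) * (of_nat b)^k + of_nat (Suc k) * (\<Sum>n\<in>{a<..<b}. (of_nat n :: rat) ^ k)"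
      unfolding set by (simp add: distrib_left)
    also have "\<dots> = ap Nb (Suc k) (of_nat b + 1) - ap Fb (Suc k) (of_nat a)"
      unfolding Suc.IH[OF ab] using st by simp
    finally show ?thesis unfolding e .
  qed
qed

lemma faulhaber:
  fixes a b :: nat
  assumes "a < b"
  shows "(\<Sum>n\<in>{a<..<b}. (of_nat n :: rat) ^ k)
         = 1 / of_nat (k + 1) * (\<Sum>j = 0..k + 1. of_nat ((k + 1) choose j) * seki_bernoulli j *
             ((-1)^j * of_nat b ^ (k + 1 - j) - of_nat a ^ (k + 1 - j)))"
proof -
  have "(\<Sum>j = 0..k + 1. of_nat ((k + 1) choose j) * seki_bernoulli j *
             ((-1)^j * of_nat b ^ (k + 1 - j) - of_nat a ^ (k + 1 - j)))
        = ap Nb (Suc k) (of_nat b) - ap Fb (Suc k) (of_nat a)"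
    unfolding ap_expand sum_subtractf[symmetric] Suc_eq_plus1
    by (rule sum.cong[OF refl]) (simp only: sb_Fb Nb_def refl_nth right_diff_distrib mult_ac)
  thus ?thesis using faul_aux[OF assms, of k] by (simp add: field_simps)
qed



definition S :: "nat \<Rightarrow> nat \<Rightarrow> nat list set" where
  "S p r = {ns. length ns = r \<and> sorted_wrt (<) ns \<and> set ns \<subseteq> {1..<p}}"

definition W :: "int list \<Rightarrow> nat list \<Rightarrow> rat" where
  "W ks ns = (\<Prod>i<length ks. (of_nat (ns ! i) :: rat) powi (- (ks ! i)))"

lemma zeta_SW: "zeta_p p ks = (\<Sum>ns\<in>S p (length ks). W ks ns)"
  unfolding zeta_p_def S_def W_def ..

lemma finite_S: "finite (S p r)"
proof -
  have "S p r \<subseteq> {xs. set xs \<subseteq> {1..<p} \<and> length xs \<le> r}" unfolding S_def by auto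
  thus ?thesis using finite_lists_length_le[of "{1..<p}" r] finite_subset by blast
qed

lemma W_map2: "length ns = length ks \<Longrightarrow>
   W ks ns = prod_list (map2 (\<lambda>c n. (of_nat n :: rat) powi (- c)) ks ns)"
proof (induction ks arbitrary: ns)
  case Nil thus ?case by (simp add: W_def)
next
  case (Cons c ks)
  then obtain n ns' where ns: "ns = n # ns'" and l: "length ns' = length ks" by (cases ns) auto
  have "W (c # ks) ns = of_nat n powi (- c) * W ks ns'"
    unfolding W_def ns by (simp add: prod.lessThan_Suc_shift del: prod.lessThan_Suc)
  thus ?case using Cons.IH[OF l] ns by simp
qed

lemma W_ins:
  assumes "length ks1 = m" "length zs = m + length ks2"
  shows "W (ks1 @ c # ks2) (take m zs @ n # drop m zs) = W (ks1 @ ks2) zs * (of_nat n) powi (- c)"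
proof -
  have zs: "zs = take m zs @ drop m zs" by simp
  have l1: "length (take m zs) = m" using assms by simp
  have l2: "length (drop m zs) = length ks2" using assms by simp
  show ?thesis
    apply (subst W_map2, use assms in simp)
    apply (subst W_map2, use assms in simp)
    using assms l1 l2 by (simp add: zip_append zip_append1)
qed

lemma W_upd:
  assumes "m < length ks" "length ns = length ks" "ns ! m \<noteq> 0"
  shows "W (ks[m := ks ! m - int e]) ns = W ks ns * of_nat (ns ! m) ^ e"
proof -
  have "W (ks[m := ks ! m - int e]) ns =
        (\<Prod>i<length ks. (if i = m then of_nat (ns ! i) ^ e else 1) * (of_nat (ns ! i) :: rat) powi (- (ks ! i)))"
    unfolding W_def
  proof (rule prod.cong)
    fix i assume "i \<in> {..<length ks}"
    show "(of_nat (ns ! i) :: rat) powi - (ks[m := ks ! m - int e] ! i) =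
         (if i = m then of_nat (ns ! i) ^ e else 1) * of_nat (ns ! i) powi - (ks ! i)"
    proof (cases "i = m")
      case True
      have nz: "(of_nat (ns ! m) :: rat) \<noteq> 0" using assms by simp
      have "(of_nat (ns ! m) :: rat) powi (- (ks ! m - int e)) = of_nat (ns ! m) powi (int e + - (ks ! m))"
        by (simp add: algebra_simps)
      also have "\<dots> = of_nat (ns ! m) powi (int e) * of_nat (ns ! m) powi - (ks ! m)"
        using nz by (rule power_int_add[OF disjI1])
      also have "\<dots> = of_nat (ns ! m) ^ e * of_nat (ns ! m) powi - (ks ! m)"
        by (simp only: power_int_of_nat)
      finally show ?thesis using True assms by simp
    qed simp
  qed simp
  also have "\<dots> = (\<Prod>i<length ks. (if i = m then of_nat (ns ! i) ^ e else 1)) * W ks ns"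
    unfolding W_def prod.distrib ..
  also have "(\<Prod>i<length ks. (if i = m then (of_nat (ns ! i) :: rat) ^ e else 1)) = of_nat (ns ! m) ^ e"
    using assms by (simp add: prod.delta)
  finally show ?thesis by simp
qed



definition lo :: "nat \<Rightarrow> nat list \<Rightarrow> nat" where
  "lo m zs = (if m = 0 then 0 else zs ! (m - 1))"
definition hi :: "nat \<Rightarrow> nat \<Rightarrow> nat \<Rightarrow> nat list \<Rightarrow> nat" where
  "hi p m L zs = (if m = L then p else zs ! m)"

lemma sorted_nth: "sorted_wrt (<) (xs :: nat list) \<longleftrightarrow> (\<forall>i. Suc i < length xs \<longrightarrow> xs!i < xs!(Suc i))"
  by (rule sorted_wrt_iff_nth_Suc_transp) (simp add: transp_def)

lemma nth_ins: "m \<le> length zs \<Longrightarrow> i < Suc (length zs) \<Longrightarrow>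
  (take m zs @ n # drop m zs) ! i = (if i < m then zs ! i else if i = m then n else zs ! (i - 1))"
  by (auto simp: nth_append min_def nth_Cons' not_less)

lemma nth_del: "m < length ns \<Longrightarrow> i < length ns - 1 \<Longrightarrow>
  (take m ns @ drop (Suc m) ns) ! i = (if i < m then ns ! i else ns ! (Suc i))"
  by (auto simp: nth_append min_def not_less)

lemma lo_hi_lt:
  assumes "zs \<in> S p L" "m \<le> L" "1 \<le> L"
  shows "lo m zs < hi p m L zs"
  using assms unfolding S_def lo_def hi_def sorted_nth
  apply (auto simp: subset_iff)
  apply (metis One_nat_def diff_less le_eq_less_or_eq less_numeral_extra(1) nth_mem order.strict_trans2)
  apply (metis Suc_pred le_eq_less_or_eq not_gr0 not_less_eq_eq)
  done



lemma ins_in_S: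
  assumes zs: "zs \<in> S p L" and mL: "m \<le> L" and lon: "lo m zs < n" and nhi: "n < hi p m L zs"
  shows "take m zs @ n # drop m zs \<in> S p (Suc L)"
proof -
  define ns where "ns = take m zs @ n # drop m zs"
  have lz: "length zs = L" and sz: "sorted_wrt (<) zs" and setz: "set zs \<subseteq> {1..<p}"
    using zs unfolding S_def by auto
  have len: "length ns = Suc L" unfolding ns_def using lz mL by simp
  have nth: "ns ! i = (if i < m then zs ! i else if i = m then n else zs ! (i - 1))" if "i < Suc L" for i
    unfolding ns_def using nth_ins[of m zs i n] lz mL that by simp
  have zlt: "zs ! i < zs ! Suc i" if "Suc i < L" for i using sz that lz unfolding sorted_nth by simp
  have zin: "zs ! i \<in> {1..<p}" if "i < L" for i using setz lz that nth_mem by blast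
  have srt: "sorted_wrt (<) ns" unfolding sorted_nth len
  proof (intro allI impI)
    fix i assume i: "Suc i < Suc L"
    consider "Suc i < m" | "Suc i = m" | "i = m" | "m < i" by linarith
    thus "ns ! i < ns ! Suc i"
    proof cases
      case 1 thus ?thesis using nth i zlt mL by simp
    next
      case 2 thus ?thesis using nth i lon unfolding lo_def by auto
    next
      case 3 thus ?thesis using nth i nhi unfolding hi_def by auto
    next
      case 4
      hence "Suc (i - 1) < L" "Suc (i - 1) = i" using i by auto
      thus ?thesis using nth i 4 zlt[of "i - 1"] by simp
    qed
  qed
  have "ns ! i \<in> {1..<p}" if "i < Suc L" for i
  proof -
    consider "i < m" | "i = m" | "m < i" by linarith
    thus ?thesis
    proof cases
      case 1 thus ?thesis using nth that zin mL by simp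
    next
      case 2
      have "n \<ge> 1" using lon by simp
      moreover have "n < p"
      proof (cases "m = L")
        case True thus ?thesis using nhi unfolding hi_def by simp
      next
        case False thus ?thesis using nhi zin[of m] mL unfolding hi_def by auto
      qed
      ultimately show ?thesis using nth that 2 by simp
    next
      case 3 thus ?thesis using nth that zin[of "i - 1"] by simp
    qed
  qed
  hence "set ns \<subseteq> {1..<p}" using len by (auto simp: set_conv_nth)
  thus ?thesis using len srt unfolding ns_def[symmetric] S_def by simp
qed

lemma del_in_S:
  assumes ns: "ns \<in> S p (Suc L)" and mL: "m \<le> L"
  shows "take m ns @ drop (Suc m) ns \<in> S p L"
    and "lo m (take m ns @ drop (Suc m) ns) < ns ! m"
    and "ns ! m < hi p m L (take m ns @ drop (Suc m) ns)"
proof -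
  define zs where "zs = take m ns @ drop (Suc m) ns"
  have ln: "length ns = Suc L" and sn: "sorted_wrt (<) ns" and setn: "set ns \<subseteq> {1..<p}"
    using ns unfolding S_def by auto
  have lz: "length zs = L" unfolding zs_def using ln mL by simp
  have nth: "zs ! i = (if i < m then ns ! i else ns ! Suc i)" if "i < L" for i
    unfolding zs_def using nth_del[of m ns i] ln mL that by simp
  have nlt: "ns ! i < ns ! j" if "i < j" "j < Suc L" for i j
    using sorted_wrt_nth_less[OF sn that(1)] that ln by simp
  have nin: "ns ! i \<in> {1..<p}" if "i < Suc L" for i using subsetD[OF setn nth_mem[of i ns]] ln that by simp
  have "sorted_wrt (<) zs" unfolding sorted_nth lz
  proof (intro allI impI)
    fix i assume i: "Suc i < L"
    consider "Suc i < m" | "Suc i = m" | "m \<le> i" by linarith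
    thus "zs ! i < zs ! Suc i"
    proof cases
      case 1
      hence "zs ! i = ns ! i" "zs ! Suc i = ns ! Suc i" using nth[of i] nth[of "Suc i"] i by auto
      thus ?thesis using nlt[of i "Suc i"] i by simp
    next
      case 2
      hence "zs ! i = ns ! i" "zs ! Suc i = ns ! Suc (Suc i)" using nth[of i] nth[of "Suc i"] i by auto
      thus ?thesis using nlt[of i "Suc (Suc i)"] i by simp
    next
      case 3
      hence "zs ! i = ns ! Suc i" "zs ! Suc i = ns ! Suc (Suc i)" using nth[of i] nth[of "Suc i"] i by auto
      thus ?thesis using nlt[of "Suc i" "Suc (Suc i)"] i by simp
    qed
  qed
  moreover have "set zs \<subseteq> {1..<p}" unfolding zs_def using setn
    by (auto dest: in_set_takeD in_set_dropD)
  ultimately show "zs \<in> S p L" using lz unfolding S_def by simp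
  show "lo m zs < ns ! m"
  proof (cases "m = 0")
    case True thus ?thesis using nin[of m] mL unfolding lo_def by simp
  next
    case False
    hence "lo m zs = ns ! (m - 1)" using nth[of "m - 1"] mL unfolding lo_def by simp
    thus ?thesis using nlt[of "m - 1" m] False mL by simp
  qed
  show "ns ! m < hi p m L zs"
  proof (cases "m = L")
    case True thus ?thesis using nin[of m] unfolding hi_def by simp
  next
    case False
    hence "hi p m L zs = ns ! Suc m" using nth[of m] mL unfolding hi_def by simp
    thus ?thesis using nlt[of m "Suc m"] False mL by simp
  qed
qed

lemma bij_ins:
  assumes mL: "m \<le> L"
  shows "bij_betw (\<lambda>(zs, n). take m zs @ n # drop m zs)
           (SIGMA zs:S p L. {lo m zs<..<hi p m L zs}) (S p (Suc L))"
proof (rule bij_betw_byWitness[where f' = "\<lambda>ns. (take m ns @ drop (Suc m) ns, ns ! m)"])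
  show "\<forall>a\<in>SIGMA zs:S p L. {lo m zs<..<hi p m L zs}.
          (\<lambda>ns. (take m ns @ drop (Suc m) ns, ns ! m)) ((\<lambda>(zs, n). take m zs @ n # drop m zs) a) = a"
  proof
    fix a assume a: "a \<in> (SIGMA zs:S p L. {lo m zs<..<hi p m L zs})"
    obtain zs n where a': "a = (zs, n)" "zs \<in> S p L" using a by auto
    have "length zs = L" using a' unfolding S_def by simp
    thus "(\<lambda>ns. (take m ns @ drop (Suc m) ns, ns ! m)) ((\<lambda>(zs, n). take m zs @ n # drop m zs) a) = a"
      using a' mL by (simp add: nth_append)
  qed
  show "\<forall>a'\<in>S p (Suc L). (\<lambda>(zs, n). take m zs @ n # drop m zs) ((\<lambda>ns. (take m ns @ drop (Suc m) ns, ns ! m)) a') = a'"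
  proof
    fix ns assume "ns \<in> S p (Suc L)"
    hence "length ns = Suc L" unfolding S_def by simp
    thus "(\<lambda>(zs, n). take m zs @ n # drop m zs) ((\<lambda>ns. (take m ns @ drop (Suc m) ns, ns ! m)) ns) = ns"
      using mL by (simp add: id_take_nth_drop[symmetric] min_def)
  qed
  show "(\<lambda>(zs, n). take m zs @ n # drop m zs) ` (SIGMA zs:S p L. {lo m zs<..<hi p m L zs}) \<subseteq> S p (Suc L)"
    using ins_in_S mL by auto
  show "(\<lambda>ns. (take m ns @ drop (Suc m) ns, ns ! m)) ` S p (Suc L) \<subseteq> (SIGMA zs:S p L. {lo m zs<..<hi p m L zs})"
    using del_in_S[OF _ mL] by auto
qed



lemma sum_hi:
  assumes "length ks' = L" "m \<le> L" "e = k + 1 - j"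
  shows "(\<Sum>zs\<in>S p L. W ks' zs * of_nat (hi p m L zs) ^ e) =
    (if m < L then zeta_p p (ks'[m := ks' ! m - int e]) else zeta_p p ks' * of_nat p ^ e)"
proof (cases "m < L")
  case True
  have "(\<Sum>zs\<in>S p L. W ks' zs * of_nat (hi p m L zs) ^ e) = (\<Sum>zs\<in>S p L. W (ks'[m := ks' ! m - int e]) zs)"
  proof (rule sum.cong[OF refl])
    fix zs assume zs: "zs \<in> S p L"
    hence lz: "length zs = L" and sz: "set zs \<subseteq> {1..<p}" unfolding S_def by auto
    have "m < length zs" using True lz by simp
    hence "zs ! m \<in> {1..<p}" using subsetD[OF sz nth_mem] by blast
    hence "zs ! m \<noteq> 0" by simp
    thus "W ks' zs * of_nat (hi p m L zs) ^ e = W (ks'[m := ks' ! m - int e]) zs"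
      using W_upd[of m ks' zs e] True assms lz unfolding hi_def by simp
  qed
  thus ?thesis using True assms by (simp add: zeta_SW)
next
  case False
  thus ?thesis using assms by (simp add: zeta_SW hi_def sum_distrib_right)
qed

lemma sum_lo:
  assumes "length ks' = L" "m \<le> L" "e = k + 1 - j" "j \<le> k + 1"
  shows "(\<Sum>zs\<in>S p L. W ks' zs * of_nat (lo m zs) ^ e) =
    (if m = 0 then (if j = k + 1 then 1 else 0) * zeta_p p ks' else zeta_p p (ks'[m - 1 := ks' ! (m - 1) - int e]))"
proof (cases "m = 0")
  case False
  have "(\<Sum>zs\<in>S p L. W ks' zs * of_nat (lo m zs) ^ e) = (\<Sum>zs\<in>S p L. W (ks'[m - 1 := ks' ! (m - 1) - int e]) zs)"
  proof (rule sum.cong[OF refl])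
    fix zs assume zs: "zs \<in> S p L"
    hence lz: "length zs = L" and sz: "set zs \<subseteq> {1..<p}" unfolding S_def by auto
    have "m - 1 < length zs" using False assms lz by simp
    hence "zs ! (m - 1) \<in> {1..<p}" using subsetD[OF sz nth_mem] by blast
    hence "zs ! (m - 1) \<noteq> 0" by simp
    thus "W ks' zs * of_nat (lo m zs) ^ e = W (ks'[m - 1 := ks' ! (m - 1) - int e]) zs"
      using W_upd[of "m - 1" ks' zs e] False assms lz unfolding lo_def by simp
  qed
  thus ?thesis using False assms by (simp add: zeta_SW)
next
  case True
  have "(0::rat) ^ e = (if j = k + 1 then 1 else 0)" using assms by auto
  thus ?thesis using True assms by (simp add: zeta_SW lo_def sum_distrib_right)
qed

lemma main:
  assumes r2: "2 \<le> length ks" and mr: "m < length ks" and km: "ks ! m = - int k"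
    and ks': "ks' = take m ks @ drop (Suc m) ks"
  shows "zeta_p p ks = 1 / of_nat (k + 1) * (\<Sum>j = 0..k + 1. of_nat ((k + 1) choose j) * seki_bernoulli j *
     ((-1)^j * (if Suc m < length ks then zeta_p p (ks'[m := ks' ! m - int (k + 1 - j)])
                else zeta_p p ks' * of_nat p ^ (k + 1 - j))
      - (if m = 0 then (if j = k + 1 then 1 else 0) * zeta_p p ks'
         else zeta_p p (ks'[m - 1 := ks' ! (m - 1) - int (k + 1 - j)]))))"
proof -
  define L where "L = length ks - 1"
  have lks: "length ks = Suc L" and L1: "1 \<le> L" and mL: "m \<le> L" using r2 mr unfolding L_def by auto
  have lks': "length ks' = L" using ks' lks mL by simp
  have ksd: "ks = take m ks @ (- int k) # drop (Suc m) ks" using id_take_nth_drop[OF mr] km by simp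
  define c where "c j = of_nat ((k + 1) choose j) * seki_bernoulli j" for j
  define F where "F zs = W ks' zs * (\<Sum>n\<in>{lo m zs<..<hi p m L zs}. (of_nat n :: rat) ^ k)" for zs
  have "zeta_p p ks = (\<Sum>ns\<in>S p (Suc L). W ks ns)" using lks by (simp add: zeta_SW)
  also have "\<dots> = (\<Sum>x\<in>(SIGMA zs:S p L. {lo m zs<..<hi p m L zs}). W ks ((\<lambda>(zs, n). take m zs @ n # drop m zs) x))"
    by (rule sum.reindex_bij_betw[OF bij_ins[OF mL], symmetric])
  also have "\<dots> = (\<Sum>(zs, n)\<in>(SIGMA zs:S p L. {lo m zs<..<hi p m L zs}). W ks (take m zs @ n # drop m zs))"
    by (simp add: case_prod_unfold)
  also have "\<dots> = (\<Sum>zs\<in>S p L. \<Sum>n\<in>{lo m zs<..<hi p m L zs}. W ks (take m zs @ n # drop m zs))"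
    by (rule sum.Sigma[symmetric]) (auto simp: finite_S)
  also have "\<dots> = (\<Sum>zs\<in>S p L. F zs)"
    unfolding F_def sum_distrib_left
  proof (intro sum.cong refl)
    fix zs n assume zs: "zs \<in> S p L"
    hence lz: "length zs = m + length (drop (Suc m) ks)" using lks mL unfolding S_def by simp
    have "W ks (take m zs @ n # drop m zs) = W (take m ks @ (- int k) # drop (Suc m) ks) (take m zs @ n # drop m zs)"
      using ksd by simp
    also have "\<dots> = W ks' zs * of_nat n powi (- (- int k))"
      using W_ins[of "take m ks" m zs "drop (Suc m) ks"] lz mr ks' by simp
    finally show "W ks (take m zs @ n # drop m zs) = W ks' zs * of_nat n ^ k" by simp
  qed
  also have "\<dots> = (\<Sum>zs\<in>S p L. 1 / of_nat (k + 1) * (\<Sum>j = 0..k + 1. c j *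
        ((-1)^j * (W ks' zs * of_nat (hi p m L zs) ^ (k + 1 - j)) - W ks' zs * of_nat (lo m zs) ^ (k + 1 - j))))"
  proof (rule sum.cong[OF refl])
    fix zs assume zs: "zs \<in> S p L"
    have "F zs = W ks' zs * (1 / of_nat (k + 1) * (\<Sum>j = 0..k + 1. c j *
        ((-1)^j * of_nat (hi p m L zs) ^ (k + 1 - j) - of_nat (lo m zs) ^ (k + 1 - j))))"
      unfolding F_def c_def using faulhaber[OF lo_hi_lt[OF zs mL L1]] by simp
    thus "F zs = 1 / of_nat (k + 1) * (\<Sum>j = 0..k + 1. c j *
        ((-1)^j * (W ks' zs * of_nat (hi p m L zs) ^ (k + 1 - j)) - W ks' zs * of_nat (lo m zs) ^ (k + 1 - j)))"
      by (simp add: sum_distrib_left algebra_simps)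
  qed
  also have "\<dots> = 1 / of_nat (k + 1) * (\<Sum>j = 0..k + 1. c j *
        ((-1)^j * (\<Sum>zs\<in>S p L. W ks' zs * of_nat (hi p m L zs) ^ (k + 1 - j))
         - (\<Sum>zs\<in>S p L. W ks' zs * of_nat (lo m zs) ^ (k + 1 - j))))"
    by (simp add: sum_distrib_left sum_subtractf right_diff_distrib sum.swap[of _ "S p L"])
  also have "\<dots> = 1 / of_nat (k + 1) * (\<Sum>j = 0..k + 1. c j *
     ((-1)^j * (if Suc m < length ks then zeta_p p (ks'[m := ks' ! m - int (k + 1 - j)])
                else zeta_p p ks' * of_nat p ^ (k + 1 - j))
      - (if m = 0 then (if j = k + 1 then 1 else 0) * zeta_p p ks'
         else zeta_p p (ks'[m - 1 := ks' ! (m - 1) - int (k + 1 - j)]))))"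
  proof -
    have "Suc m < length ks \<longleftrightarrow> m < L" using lks by simp
    hence "\<And>j. j \<in> {0..k+1} \<Longrightarrow> (\<Sum>zs\<in>S p L. W ks' zs * of_nat (hi p m L zs) ^ (k + 1 - j)) =
       (if Suc m < length ks then zeta_p p (ks'[m := ks' ! m - int (k + 1 - j)])
                else zeta_p p ks' * of_nat p ^ (k + 1 - j))"
      using sum_hi[OF lks' mL refl] by simp
    moreover have "\<And>j. j \<in> {0..k+1} \<Longrightarrow> (\<Sum>zs\<in>S p L. W ks' zs * of_nat (lo m zs) ^ (k + 1 - j)) =
      (if m = 0 then (if j = k + 1 then 1 else 0) * zeta_p p ks'
         else zeta_p p (ks'[m - 1 := ks' ! (m - 1) - int (k + 1 - j)]))"
      using sum_lo[OF lks' mL refl] by simp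
    ultimately show ?thesis by (intro arg_cong2[where f = "(*)"] refl sum.cong) simp_all
  qed
  finally show ?thesis unfolding c_def .
qed



lemma ahat_refl: "(\<And>p. a p = b p) \<Longrightarrow> a \<doteq>\<^sub>A b"
proof -
  assume h: "\<And>p. a p = b p"
  have "padic_cong p n (a p) (b p)" if "prime p" for p n
    unfolding padic_cong_def
  proof (intro exI conjI)
    show "\<not> int p dvd 1" using that not_prime_1 by auto
    show "a p - b p = of_int (int p ^ n * 0) / of_int 1" using h by simp
  qed
  hence "{p. prime p \<and> \<not> padic_cong p n (a p) (b p)} = {}" for n by auto
  thus ?thesis unfolding ahat_eq_def by (metis finite.emptyI)
qed

lemma int_e: "j \<le> k + 1 \<Longrightarrow> c - int (k + 1 - j) = c - int k - 1 + int j"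
  by simp

lemma upd_del_hi:
  assumes "Suc m < length ks"
  shows "(take m ks @ drop (Suc m) ks)[m := v] = take m ks @ v # drop (Suc (Suc m)) ks"
    and "(take m ks @ drop (Suc m) ks) ! m = ks ! Suc m"
proof -
  have "drop (Suc m) ks = ks ! Suc m # drop (Suc (Suc m)) ks" using assms by (simp add: Cons_nth_drop_Suc)
  thus "(take m ks @ drop (Suc m) ks)[m := v] = take m ks @ v # drop (Suc (Suc m)) ks"
    and "(take m ks @ drop (Suc m) ks) ! m = ks ! Suc m"
    using assms by (simp_all add: list_update_append nth_append min_def)
qed

lemma upd_del_lo:
  assumes "m < length ks" "0 < m"
  shows "(take m ks @ drop (Suc m) ks)[m - 1 := v] = take (m - 1) ks @ v # drop (Suc m) ks"
    and "(take m ks @ drop (Suc m) ks) ! (m - 1) = ks ! (m - 1)"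
proof -
  have t: "take m ks = take (m - 1) ks @ [ks ! (m - 1)]" using assms
    by (metis Suc_diff_1 Suc_lessD less_trans_Suc take_Suc_conv_app_nth)
  define A where "A = take (m - 1) ks"
  have la: "length A = m - 1" unfolding A_def using assms by simp
  have "(A @ ks ! (m - 1) # drop (Suc m) ks)[length A := v] = A @ v # drop (Suc m) ks"
    by (simp only: list_update_length)
  moreover have "(A @ ks ! (m - 1) # drop (Suc m) ks) ! length A = ks ! (m - 1)"
    by (simp only: nth_append_length)
  ultimately show "(take m ks @ drop (Suc m) ks)[m - 1 := v] = take (m - 1) ks @ v # drop (Suc m) ks"
    and "(take m ks @ drop (Suc m) ks) ! (m - 1) = ks ! (m - 1)"
    unfolding t A_def[symmetric] la by simp_all
qed

lemma main2:
  assumes r2: "2 \<le> length ks" and mr: "m < length ks" and km: "ks ! m = - int k"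
    and ks': "ks' = take m ks @ drop (Suc m) ks"
  shows "zeta_p p ks = 1 / of_nat (k + 1) * (\<Sum>j = 0..k + 1. of_nat ((k + 1) choose j) * seki_bernoulli j *
     ((-1)^j * (if Suc m < length ks then zeta_p p (ks'[m := ks' ! m - int k - 1 + int j])
                else zeta_p p ks' * of_nat p ^ (k + 1 - j))
      - (if m = 0 then (if j = k + 1 then 1 else 0) * zeta_p p ks'
         else zeta_p p (ks'[m - 1 := ks' ! (m - 1) - int k - 1 + int j]))))"
  unfolding main[OF assms, of p]
  apply (intro arg_cong2[where f = "(*)"] refl sum.cong)
  apply (simp only: atLeastAtMost_iff int_e)
  done

lemma upd1: "Suc 0 < length ks \<Longrightarrow> (drop (Suc 0) ks)[0 := v] = v # drop (Suc (Suc 0)) ks"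
proof -
  assume "Suc 0 < length ks"
  hence "drop (Suc 0) ks = ks ! Suc 0 # drop (Suc (Suc 0)) ks" by (rule Cons_nth_drop_Suc[symmetric])
  thus ?thesis by simp
qed

theorem theorem1p3:
  fixes ks :: "int list" and i k :: nat
  assumes "length ks \<ge> 2"
    and "1 \<le> i" and "i \<le> length ks"
    and "ks ! (i - 1) = - int k"
  shows
   "(i = 1 \<longrightarrow>
      zeta_A ks \<doteq>\<^sub>A (\<lambda>p. 1 / of_nat (k + 1) * (\<Sum>j = 0..k + 1.
         of_nat ((k + 1) choose j) * seki_bernoulli j *
         ((-1) ^ j * zeta_A ((ks ! 1 - int k - 1 + int j) # drop 2 ks) p
          - (if j = k + 1 then 1 else 0) * zeta_A (drop 1 ks) p))))
  \<and> (1 < i \<and> i < length ks \<longrightarrow>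
      zeta_A ks \<doteq>\<^sub>A (\<lambda>p. 1 / of_nat (k + 1) * (\<Sum>j = 0..k + 1.
         of_nat ((k + 1) choose j) * seki_bernoulli j *
         ((-1) ^ j * zeta_A (take (i - 1) ks @ [ks ! i - int k - 1 + int j] @ drop (i + 1) ks) p
          - zeta_A (take (i - 2) ks @ [ks ! (i - 2) - int k - 1 + int j] @ drop i ks) p))))
  \<and> (i = length ks \<longrightarrow>
      zeta_A ks \<doteq>\<^sub>A (\<lambda>p. 1 / of_nat (k + 1) * (\<Sum>j = 0..k + 1.
         of_nat ((k + 1) choose j) * seki_bernoulli j *
         ((-1) ^ j * zeta_A (take (length ks - 1) ks) p * of_nat p ^ (k + 1 - j)
          - zeta_A (take (length ks - 2) ks @ [ks ! (length ks - 2) - int k - 1 + int j]) p))))"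
proof (intro conjI impI)
  define m where "m = i - 1"
  have mr: "m < length ks" and km: "ks ! m = - int k" using assms unfolding m_def by auto
  note M = main2[OF assms(1) mr km refl]
  {
    assume i1: "i = 1"
    hence m0: "m = 0" unfolding m_def by simp
    show "zeta_A ks \<doteq>\<^sub>A (\<lambda>p. 1 / of_nat (k + 1) * (\<Sum>j = 0..k + 1.
         of_nat ((k + 1) choose j) * seki_bernoulli j *
         ((-1) ^ j * zeta_A ((ks ! 1 - int k - 1 + int j) # drop 2 ks) p
          - (if j = k + 1 then 1 else 0) * zeta_A (drop 1 ks) p)))"
    proof (rule ahat_refl)
      fix p
      have s: "Suc 0 < length ks" using assms by simp
      show "zeta_A ks p = 1 / of_nat (k + 1) * (\<Sum>j = 0..k + 1.
         of_nat ((k + 1) choose j) * seki_bernoulli j *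
         ((-1) ^ j * zeta_A ((ks ! 1 - int k - 1 + int j) # drop 2 ks) p
          - (if j = k + 1 then 1 else 0) * zeta_A (drop 1 ks) p))"
        unfolding zeta_A_def M[of p] m0
        apply (intro arg_cong2[where f = "(*)"] refl sum.cong)
        using s by (simp add: upd1[OF s] numeral_2_eq_2)
    qed
  }
  {
    assume i2: "1 < i \<and> i < length ks"
    hence m1: "0 < m" "Suc m < length ks" "i = Suc m" unfolding m_def by auto
    show "zeta_A ks \<doteq>\<^sub>A (\<lambda>p. 1 / of_nat (k + 1) * (\<Sum>j = 0..k + 1.
         of_nat ((k + 1) choose j) * seki_bernoulli j *
         ((-1) ^ j * zeta_A (take (i - 1) ks @ [ks ! i - int k - 1 + int j] @ drop (i + 1) ks) p
          - zeta_A (take (i - 2) ks @ [ks ! (i - 2) - int k - 1 + int j] @ drop i ks) p)))"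
    proof (rule ahat_refl)
      fix p
      have e: "i - 2 = m - 1" "i + 1 = Suc (Suc m)" using m1 by simp_all
      show "zeta_A ks p = 1 / of_nat (k + 1) * (\<Sum>j = 0..k + 1.
         of_nat ((k + 1) choose j) * seki_bernoulli j *
         ((-1) ^ j * zeta_A (take (i - 1) ks @ [ks ! i - int k - 1 + int j] @ drop (i + 1) ks) p
          - zeta_A (take (i - 2) ks @ [ks ! (i - 2) - int k - 1 + int j] @ drop i ks) p))"
        unfolding zeta_A_def M[of p] e
        apply (intro arg_cong2[where f = "(*)"] refl sum.cong)
        using m1 by (simp add: upd_del_hi[OF m1(2)] upd_del_lo[OF mr m1(1)] del: One_nat_def)
    qed
  }
  {
    assume i3: "i = length ks"
    hence m3: "Suc m = length ks" "0 < m" using assms unfolding m_def by auto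
    have d: "drop (Suc m) ks = []" using m3 by simp
    have u: "(take m ks)[m - 1 := v] = take (m - 1) ks @ [v]" for v
      using upd_del_lo(1)[OF mr m3(2), of v] d by simp
    have u2: "take m ks ! (m - 1) = ks ! (m - 1)" using m3 by simp
    show "zeta_A ks \<doteq>\<^sub>A (\<lambda>p. 1 / of_nat (k + 1) * (\<Sum>j = 0..k + 1.
         of_nat ((k + 1) choose j) * seki_bernoulli j *
         ((-1) ^ j * zeta_A (take (length ks - 1) ks) p * of_nat p ^ (k + 1 - j)
          - zeta_A (take (length ks - 2) ks @ [ks ! (length ks - 2) - int k - 1 + int j]) p)))"
    proof (rule ahat_refl)
      fix p
      have e: "length ks - 2 = m - 1" "length ks - 1 = m" using m3 by auto
      show "zeta_A ks p = 1 / of_nat (k + 1) * (\<Sum>j = 0..k + 1.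
         of_nat ((k + 1) choose j) * seki_bernoulli j *
         ((-1) ^ j * zeta_A (take (length ks - 1) ks) p * of_nat p ^ (k + 1 - j)
          - zeta_A (take (length ks - 2) ks @ [ks ! (length ks - 2) - int k - 1 + int j]) p))"
        unfolding zeta_A_def M[of p] e
        apply (intro arg_cong2[where f = "(*)"] refl sum.cong)
        using m3 d by (simp add: u u2 mult.assoc del: One_nat_def)
    qed
  }
qed

end
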